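(* Let $\alpha\in(0,\frac12)$ and $d\ge2$ be such that $(d+1)\alpha\notin\mathbb{Z}$. Then there is no real linear subspace of $\mathbb{C}^{\mathcal A_d}$, other than $\{0\}$ and $\mathbb{C}^{\mathcal A_d}$, which is invariant under every $L_p$, $p\in\mathcal A_d$.
   Context: $\mathcal A_d=\{1-d,3-d,\dots,d-1\}$ (ordered as integers), $(e_q)_{q\in\mathcal A_d}$ the canonical basis of $\mathbb{C}^{\mathcal A_d}$, $\rho=e^{2\pi i\alpha}$, $\zeta=\rho^{-1}$. For $p\in\mathcal A_d$, $L_p$ is the $\mathbb{C}$-linear operator with $L_p(e_q)=e_q-e_p$ if $q>p$, $L_p(e_q)=e_q-\zeta e_p$ if $q<p$, and $L_p(e_p)=-\zeta e_p$. *)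

theory Defs
  imports "HOL-Analysis.Analysis"
begin

definition Aset :: "nat \<Rightarrow> int set" where
  "Aset d = {q. \<exists>k::nat. k < d \<and> q = 1 - int d + 2 * int k}"

text \<open>C^{A_d}: complex vectors indexed by integers, supported on A_d.\<close>
definition Cspace :: "nat \<Rightarrow> (int \<Rightarrow> complex) set" where
  "Cspace d = {v. \<forall>q. q \<notin> Aset d \<longrightarrow> v q = 0}"

definition ebasis :: "int \<Rightarrow> (int \<Rightarrow> complex)" where
  "ebasis q = (\<lambda>r. if r = q then 1 else 0)"

definition rho :: "real \<Rightarrow> complex" where
  "rho \<alpha> = exp (2 * pi * \<i> * complex_of_real \<alpha>)"

definition zeta :: "real \<Rightarrow> complex" where
  "zeta \<alpha> = inverse (rho \<alpha>)"

definition Lbasis :: "real \<Rightarrow> int \<Rightarrow> int \<Rightarrow> (int \<Rightarrow> complex)" where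
  "Lbasis \<alpha> p q =
     (if q > p then (\<lambda>r. ebasis q r - ebasis p r)
      else if q < p then (\<lambda>r. ebasis q r - zeta \<alpha> * ebasis p r)
      else (\<lambda>r. - zeta \<alpha> * ebasis p r))"

definition Lop :: "nat \<Rightarrow> real \<Rightarrow> int \<Rightarrow> (int \<Rightarrow> complex) \<Rightarrow> (int \<Rightarrow> complex)" where
  "Lop d \<alpha> p v = (\<lambda>r. \<Sum>q\<in>Aset d. v q * Lbasis \<alpha> p q r)"

definition real_subspace_of :: "nat \<Rightarrow> (int \<Rightarrow> complex) set \<Rightarrow> bool" where
  "real_subspace_of d W \<longleftrightarrow>
     W \<subseteq> Cspace d \<and> (\<lambda>r. 0) \<in> W \<and>
     (\<forall>v\<in>W. \<forall>w\<in>W. (\<lambda>r. v r + w r) \<in> W) \<and>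
     (\<forall>c::real. \<forall>v\<in>W. (\<lambda>r. complex_of_real c * v r) \<in> W)"

end

theory Submission
  imports Defs
begin

definition cc :: "real \<Rightarrow> int \<Rightarrow> int \<Rightarrow> complex" where
  "cc \<alpha> p q = (if q > p then 1 else if q < p then zeta \<alpha> else 1 + zeta \<alpha>)"

definition phi :: "nat \<Rightarrow> real \<Rightarrow> int \<Rightarrow> (int \<Rightarrow> complex) \<Rightarrow> complex" where
  "phi d \<alpha> p v = (\<Sum>q\<in>Aset d. v q * cc \<alpha> p q)"

definition qi :: "nat \<Rightarrow> nat \<Rightarrow> int" where
  "qi d k = 1 - int d + 2 * int k"

lemma Aset_img: "Aset d = qi d ` {..<d}"
  unfolding Aset_def qi_def by auto

lemma qi_inj: "inj_on (qi d) A"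
  unfolding qi_def inj_on_def by auto

lemma finite_Aset: "finite (Aset d)"
  by (simp add: Aset_img)

lemma Lbasis_eq: "Lbasis \<alpha> p q = (\<lambda>r. ebasis q r - cc \<alpha> p q * ebasis p r)"
  unfolding Lbasis_def cc_def by (auto simp: algebra_simps)

lemma sum_ebasis:
  assumes "v \<in> Cspace d"
  shows "(\<Sum>q\<in>Aset d. v q * ebasis q r) = v r"
proof -
  have "(\<Sum>q\<in>Aset d. v q * ebasis q r) = (\<Sum>q\<in>Aset d. if r = q then v q else 0)"
    by (rule sum.cong) (auto simp: ebasis_def)
  also have "\<dots> = (if r \<in> Aset d then v r else 0)"
    using finite_Aset by (simp add: sum.delta)
  also have "\<dots> = v r" using assms unfolding Cspace_def by auto
  finally show ?thesis .
qed

lemma Lop_eq: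
  assumes "v \<in> Cspace d"
  shows "Lop d \<alpha> p v = (\<lambda>r. v r - phi d \<alpha> p v * ebasis p r)"
proof
  fix r
  have "Lop d \<alpha> p v r = (\<Sum>q\<in>Aset d. v q * ebasis q r - (v q * cc \<alpha> p q) * ebasis p r)"
    unfolding Lop_def Lbasis_eq by (simp add: algebra_simps)
  also have "\<dots> = (\<Sum>q\<in>Aset d. v q * ebasis q r) - phi d \<alpha> p v * ebasis p r"
    unfolding phi_def by (simp add: sum_subtractf sum_distrib_right)
  also have "\<dots> = v r - phi d \<alpha> p v * ebasis p r" using sum_ebasis[OF assms] by simp
  finally show "Lop d \<alpha> p v r = v r - phi d \<alpha> p v * ebasis p r" .
qed

lemma ebasis_Cspace: "p \<in> Aset d \<Longrightarrow> (\<lambda>r. z * ebasis p r) \<in> Cspace d"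
  unfolding Cspace_def ebasis_def by auto

lemma phi_ebasis: "p \<in> Aset d \<Longrightarrow> phi d \<alpha> p' (\<lambda>r. z * ebasis p r) = z * cc \<alpha> p' p"
proof -
  assume p: "p \<in> Aset d"
  have "phi d \<alpha> p' (\<lambda>r. z * ebasis p r) = (\<Sum>q\<in>Aset d. if p = q then z * cc \<alpha> p' q else 0)"
    unfolding phi_def by (rule sum.cong) (auto simp: ebasis_def)
  also have "\<dots> = z * cc \<alpha> p' p" using p finite_Aset by (simp add: sum.delta)
  finally show ?thesis .
qed

lemma Lop_ebasis: "p \<in> Aset d \<Longrightarrow>
   Lop d \<alpha> p' (\<lambda>r. z * ebasis p r) = (\<lambda>r. z * ebasis p r - z * cc \<alpha> p' p * ebasis p' r)"
  by (simp add: Lop_eq ebasis_Cspace phi_ebasis)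

lemma zeta_Im: assumes "0 < \<alpha>" "\<alpha> < 1/2" shows "Im (zeta \<alpha>) < 0"
proof -
  have "zeta \<alpha> = exp (- (2 * pi * \<i> * complex_of_real \<alpha>))"
    unfolding zeta_def rho_def by (simp add: exp_minus)
  hence "Im (zeta \<alpha>) = - sin (2 * pi * \<alpha>)" by (simp add: Im_exp)
  moreover have "sin (2 * pi * \<alpha>) > 0" using assms by (intro sin_gt_zero) auto
  ultimately show ?thesis by simp
qed

lemma zeta_nz: "zeta \<alpha> \<noteq> 0" unfolding zeta_def rho_def by simp

lemma rho_zeta: "rho \<alpha> * zeta \<alpha> = 1" unfolding zeta_def rho_def by simp


lemma W_lin:
  assumes "real_subspace_of d W" "v \<in> W" "w \<in> W"
  shows "(\<lambda>r. complex_of_real a * v r + complex_of_real b * w r) \<in> W"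
proof -
  have "(\<lambda>r. complex_of_real a * v r) \<in> W" "(\<lambda>r. complex_of_real b * w r) \<in> W"
    using assms unfolding real_subspace_of_def by auto
  moreover have "\<forall>v\<in>W. \<forall>w\<in>W. (\<lambda>r. v r + w r) \<in> W"
    using assms(1) unfolding real_subspace_of_def by simp
  ultimately show ?thesis by simp
qed

lemma W_sub:
  assumes "real_subspace_of d W" "v \<in> W" "w \<in> W"
  shows "(\<lambda>r. v r - w r) \<in> W"
  using W_lin[OF assms, of 1 "-1"] by simp

lemma W_sum:
  assumes "real_subspace_of d W" "finite S" "\<forall>q\<in>S. f q \<in> W"
  shows "(\<lambda>r. \<Sum>q\<in>S. f q r) \<in> W"
  using assms(2,3)
proof (induction S rule: finite_induct)
  case empty thus ?case using assms(1) unfolding real_subspace_of_def by simp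
next
  case (insert x F)
  have add: "\<forall>v\<in>W. \<forall>w\<in>W. (\<lambda>r. v r + w r) \<in> W"
    using assms(1) unfolding real_subspace_of_def by simp
  have "(\<lambda>r. f x r + (\<Sum>q\<in>F. f q r)) \<in> W"
    using add insert by simp
  thus ?case using insert by simp
qed

lemma lemA:
  assumes "0 < \<alpha>" "\<alpha> < 1/2" "real_subspace_of d W"
    and inv: "\<forall>p\<in>Aset d. \<forall>v\<in>W. Lop d \<alpha> p v \<in> W"
    and p: "p \<in> Aset d" and z: "z \<noteq> 0" and zW: "(\<lambda>r. z * ebasis p r) \<in> W"
  shows "(\<lambda>r. w * ebasis p r) \<in> W"
proof -
  have "Lop d \<alpha> p (\<lambda>r. z * ebasis p r) \<in> W" using inv p zW by blast
  moreover have "Lop d \<alpha> p (\<lambda>r. z * ebasis p r) = (\<lambda>r. (- zeta \<alpha> * z) * ebasis p r)"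
    using p by (simp add: Lop_ebasis cc_def algebra_simps)
  ultimately have z2: "(\<lambda>r. (- zeta \<alpha> * z) * ebasis p r) \<in> W" by simp
  define t where "t = w / z"
  define x where "x = Re (- zeta \<alpha>)"
  define y where "y = Im (- zeta \<alpha>)"
  have y: "y \<noteq> 0" using zeta_Im[OF assms(1,2)] unfolding y_def by simp
  define b where "b = Im t / y"
  define a where "a = Re t - b * x"
  have "t = complex_of_real a + complex_of_real b * (- zeta \<alpha>)"
  proof (rule complex_eqI)
    have "Re (complex_of_real a + complex_of_real b * (- zeta \<alpha>)) = a + b * x"
      by (simp add: x_def)
    thus "Re t = Re (complex_of_real a + complex_of_real b * (- zeta \<alpha>))"
      by (simp add: a_def)
    have "Im (complex_of_real a + complex_of_real b * (- zeta \<alpha>)) = b * y"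
      by (simp add: y_def)
    thus "Im t = Im (complex_of_real a + complex_of_real b * (- zeta \<alpha>))"
      using y by (simp add: b_def)
  qed
  hence weq: "w = complex_of_real a * z + complex_of_real b * (- zeta \<alpha> * z)"
    using z unfolding t_def by (simp add: field_simps)
  have eq: "(\<lambda>r. w * ebasis p r) = (\<lambda>r. complex_of_real a * (z * ebasis p r)
        + complex_of_real b * ((- zeta \<alpha> * z) * ebasis p r))"
    unfolding weq by (intro ext) (simp add: algebra_simps)
  show ?thesis unfolding eq by (rule W_lin[OF assms(3) zW z2])
qed

lemma lemB:
  assumes "0 < \<alpha>" "\<alpha> < 1/2" "real_subspace_of d W"
    and inv: "\<forall>p\<in>Aset d. \<forall>v\<in>W. Lop d \<alpha> p v \<in> W"
    and p: "p \<in> Aset d" and all: "\<forall>w. (\<lambda>r. w * ebasis p r) \<in> W"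
    and p': "p' \<in> Aset d"
  shows "(\<lambda>r. w * ebasis p' r) \<in> W"
proof -
  have e: "(\<lambda>r. 1 * ebasis p r) \<in> W" using all by blast
  have L: "Lop d \<alpha> p' (\<lambda>r. 1 * ebasis p r) \<in> W" using inv p' e by blast
  have "(\<lambda>r. 1 * ebasis p r - Lop d \<alpha> p' (\<lambda>r. 1 * ebasis p r) r) \<in> W"
    by (rule W_sub[OF assms(3) e L])
  moreover have "(\<lambda>r. 1 * ebasis p r - Lop d \<alpha> p' (\<lambda>r. 1 * ebasis p r) r)
      = (\<lambda>r. cc \<alpha> p' p * ebasis p' r)"
    unfolding Lop_ebasis[OF p] by simp
  ultimately have c: "(\<lambda>r. cc \<alpha> p' p * ebasis p' r) \<in> W" by simp
  have im: "Im (zeta \<alpha>) \<noteq> 0" using zeta_Im[OF assms(1,2)] by simp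
  have n1: "1 + zeta \<alpha> \<noteq> 0"
  proof
    assume "1 + zeta \<alpha> = 0"
    hence "Im (1 + zeta \<alpha>) = 0" by simp
    with im show False by simp
  qed
  have "cc \<alpha> p' p \<noteq> 0" using n1 zeta_nz[of \<alpha>] unfolding cc_def by simp
  thus ?thesis using lemA[OF assms(1-4) p' _ c] by blast
qed

lemma lemC:
  assumes "real_subspace_of d W" "\<forall>p\<in>Aset d. \<forall>w. (\<lambda>r. w * ebasis p r) \<in> W"
  shows "Cspace d \<subseteq> W"
proof
  fix v assume v: "v \<in> Cspace d"
  have "(\<lambda>r. \<Sum>q\<in>Aset d. v q * ebasis q r) \<in> W"
    using W_sum[OF assms(1) finite_Aset, where f="\<lambda>q r. v q * ebasis q r"] assms(2) by blast
  thus "v \<in> W" using sum_ebasis[OF v] by simp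
qed


lemma rho_pow:
  assumes "rho \<alpha> ^ m = 1" shows "real m * \<alpha> \<in> \<int>"
proof -
  have "rho \<alpha> ^ m = exp (of_nat m * (2 * pi * \<i> * complex_of_real \<alpha>))"
    unfolding rho_def by (rule exp_of_nat_mult[symmetric])
  with assms have "exp (of_nat m * (2 * pi * \<i> * complex_of_real \<alpha>)) = 1" by simp
  then obtain n :: int where "real m * (2 * pi * \<alpha>) = of_int (2 * n) * pi"
    unfolding exp_eq_1 by auto
  hence "real m * \<alpha> = of_int n" by (simp add: field_simps)
  thus ?thesis by simp
qed

lemma lemD:
  assumes a0: "0 < \<alpha>" and a1: "\<alpha> < 1/2" and nz: "real (d + 1) * \<alpha> \<notin> \<int>"
    and d: "d \<ge> 1" and v: "v \<in> Cspace d"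
    and hyp: "\<forall>p\<in>Aset d. phi d \<alpha> p v = 0"
  shows "v = (\<lambda>r. 0)"
proof -
  define u where "u k = v (qi d k)" for k
  define ck :: "nat \<Rightarrow> nat \<Rightarrow> complex" where
    "ck k j = (if j > k then 1 else if j < k then zeta \<alpha> else 1 + zeta \<alpha>)" for k j
  have cc_qi: "cc \<alpha> (qi d k) (qi d j) = ck k j" for k j
    unfolding cc_def ck_def qi_def by auto
  have phi_qi: "phi d \<alpha> (qi d k) v = (\<Sum>j<d. u j * ck k j)" for k
    unfolding phi_def Aset_img by (simp add: sum.reindex[OF qi_inj] u_def cc_qi)
  have h: "(\<Sum>j<d. u j * ck k j) = 0" if "k < d" for k
    using hyp that phi_qi[of k] unfolding Aset_img by auto
  have step: "u k = zeta \<alpha> * u (Suc k)" if "Suc k < d" for k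
  proof -
    have "0 = (\<Sum>j<d. u j * ck (Suc k) j) - (\<Sum>j<d. u j * ck k j)"
      using h[of k] h[of "Suc k"] that by simp
    also have "\<dots> = (\<Sum>j<d. u j * (ck (Suc k) j - ck k j))"
      by (simp add: sum_subtractf algebra_simps)
    also have "\<dots> = (\<Sum>j<d. (if j = Suc k then zeta \<alpha> * u j else 0) - (if j = k then u j else 0))"
      by (rule sum.cong) (auto simp: ck_def algebra_simps)
    also have "\<dots> = zeta \<alpha> * u (Suc k) - u k"
      using that by (simp add: sum_subtractf)
    finally show ?thesis by simp
  qed
  have pow: "u k = rho \<alpha> ^ k * u 0" if "k < d" for k
    using that
  proof (induction k)
    case 0 thus ?case by simp
  next
    case (Suc k)
    hence "u k = zeta \<alpha> * u (Suc k)" "u k = rho \<alpha> ^ k * u 0" using step by auto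
    hence "rho \<alpha> * (rho \<alpha> ^ k * u 0) = (rho \<alpha> * zeta \<alpha>) * u (Suc k)" by simp
    thus ?case using rho_zeta[of \<alpha>] by (simp add: mult.assoc)
  qed
  have "(\<Sum>j<d. u j * ck 0 j) = (\<Sum>j<d. u j + (if j = 0 then zeta \<alpha> * u j else 0))"
    by (rule sum.cong) (auto simp: ck_def algebra_simps)
  also have "\<dots> = (\<Sum>j<d. u j) + zeta \<alpha> * u 0"
    using d by (simp add: sum.distrib)
  also have "(\<Sum>j<d. u j) = (\<Sum>j<d. rho \<alpha> ^ j * u 0)"
    by (rule sum.cong[OF refl], rule pow, simp)
  also have "\<dots> = u 0 * (\<Sum>j<d. rho \<alpha> ^ j)"
    by (simp add: sum_distrib_left mult.commute)
  finally have e0: "u 0 * ((\<Sum>j<d. rho \<alpha> ^ j) + zeta \<alpha>) = 0"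
    using h[of 0] d by (simp add: algebra_simps)
  have r1: "rho \<alpha> \<noteq> 1"
  proof
    assume "rho \<alpha> = 1"
    hence "real 1 * \<alpha> \<in> \<int>" using rho_pow[of \<alpha> 1] by simp
    then obtain n :: int where "\<alpha> = of_int n" by (auto elim: Ints_cases)
    with a0 a1 show False by auto
  qed
  have rd: "rho \<alpha> ^ (Suc d) \<noteq> 1" using rho_pow[of \<alpha> "Suc d"] nz by auto
  have sh: "(\<Sum>j<Suc d. rho \<alpha> ^ j) = 1 + (\<Sum>j<d. rho \<alpha> * rho \<alpha> ^ j)"
    unfolding sum.lessThan_Suc_shift by simp
  have "rho \<alpha> * ((\<Sum>j<d. rho \<alpha> ^ j) + zeta \<alpha>) = 1 + (\<Sum>j<d. rho \<alpha> * rho \<alpha> ^ j)"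
    by (simp add: sum_distrib_left distrib_left rho_zeta)
  also have "\<dots> = (\<Sum>j<Suc d. rho \<alpha> ^ j)" unfolding sh ..
  also have "\<dots> = (rho \<alpha> ^ (Suc d) - 1) / (rho \<alpha> - 1)"
    by (rule geometric_sum[OF r1])
  also have "\<dots> \<noteq> 0" using r1 rd by simp
  finally have "(\<Sum>j<d. rho \<alpha> ^ j) + zeta \<alpha> \<noteq> 0" by auto
  with e0 have u0: "u 0 = 0" by simp
  show ?thesis
  proof
    fix r
    show "v r = 0"
    proof (cases "r \<in> Aset d")
      case True
      then obtain k where "k < d" "r = qi d k" unfolding Aset_img by auto
      thus ?thesis using pow[of k] u0 unfolding u_def by simp
    next
      case False thus ?thesis using v unfolding Cspace_def by auto
    qed
  qed
qed

theorem mainTheorem18: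
  fixes \<alpha> :: real and d :: nat and W :: "(int \<Rightarrow> complex) set"
  assumes "0 < \<alpha>" and "\<alpha> < 1/2" and "d \<ge> 2"
    and "real (d + 1) * \<alpha> \<notin> \<int>"
    and "real_subspace_of d W"
    and "\<forall>p\<in>Aset d. \<forall>v\<in>W. Lop d \<alpha> p v \<in> W"
  shows "W = {(\<lambda>r. 0)} \<or> W = Cspace d"
proof (cases "W = {(\<lambda>r. 0)}")
  case True thus ?thesis by simp
next
  case False
  have WC: "W \<subseteq> Cspace d" and W0: "(\<lambda>r. 0) \<in> W"
    using assms(5) unfolding real_subspace_of_def by auto
  obtain v where vW: "v \<in> W" and vnz: "v \<noteq> (\<lambda>r. 0)" using False W0 by blast
  have vC: "v \<in> Cspace d" using vW WC by blast
  obtain p where p: "p \<in> Aset d" and pnz: "phi d \<alpha> p v \<noteq> 0"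
    using lemD[OF assms(1,2,4) _ vC] assms(3) vnz by force
  have "Lop d \<alpha> p v \<in> W" using assms(6) p vW by blast
  hence "(\<lambda>r. v r - Lop d \<alpha> p v r) \<in> W" by (rule W_sub[OF assms(5) vW])
  moreover have "(\<lambda>r. v r - Lop d \<alpha> p v r) = (\<lambda>r. phi d \<alpha> p v * ebasis p r)"
    unfolding Lop_eq[OF vC] by simp
  ultimately have z: "(\<lambda>r. phi d \<alpha> p v * ebasis p r) \<in> W" by simp
  have allp: "\<forall>w. (\<lambda>r. w * ebasis p r) \<in> W"
    using lemA[OF assms(1,2,5,6) p pnz z] by blast
  have "\<forall>p'\<in>Aset d. \<forall>w. (\<lambda>r. w * ebasis p' r) \<in> W"
    using lemB[OF assms(1,2,5,6) p allp] by blast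
  hence "Cspace d \<subseteq> W" by (rule lemC[OF assms(5)])
  thus ?thesis using WC by blast
qed

end
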